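(* Consider the scalar system $\dot x(t)=\Big(\frac{1}{1+t+x(t)^2}-t|\cos t|\Big)x(t)$, $t\in[0,\infty)$. Every solution satisfies $$|x(t)|\le\exp\Big(\ln\big(1+\tfrac{3\pi}{2}\big)+1\Big)\exp\Big(-\frac{2}{3\pi}(t-t_0)\Big)|x(t_0)|,\qquad\forall t\ge t_0\ge0;$$ in particular the system is globally uniformly exponentially stable.
   Context: Globally uniformly exponentially stable: there exist constants $\theta>0$, $\alpha>0$ with $|x(t)|\le\theta|x(t_0)|e^{-\alpha(t-t_0)}$ for all $t\ge t_0$ and all solutions. *)

theory Defs
  imports "HOL-Analysis.Analysis"
begin

definition is_solution_from :: "(real \<Rightarrow> real \<Rightarrow> real) \<Rightarrow> real \<Rightarrow> (real \<Rightarrow> real) \<Rightarrow> bool" where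
  "is_solution_from f t0 x \<longleftrightarrow>
     (\<forall>t\<ge>t0. (x has_real_derivative f t (x t)) (at t within {t0..}))"

definition GUES :: "(real \<Rightarrow> real \<Rightarrow> real) \<Rightarrow> bool" where
  "GUES f \<longleftrightarrow> (\<exists>\<theta>>0. \<exists>\<alpha>>0. \<forall>t0\<ge>0. \<forall>x. is_solution_from f t0 x \<longrightarrow>
      (\<forall>t\<ge>t0. \<bar>x t\<bar> \<le> \<theta> * \<bar>x t0\<bar> * exp (- \<alpha> * (t - t0))))"

definition ex10_rhs :: "real \<Rightarrow> real \<Rightarrow> real" where
  "ex10_rhs t x = (1 / (1 + t + x\<^sup>2) - t * \<bar>cos t\<bar>) * x"

end

theory Submission
  imports Defs
begin

lemma cmp:
  fixes x g B B' :: "real \<Rightarrow> real"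
  assumes x: "\<And>s. s \<ge> t0 \<Longrightarrow> (x has_real_derivative (g s * x s)) (at s within {t0..})"
  and B: "\<And>s. s \<ge> t0 \<Longrightarrow> (B has_real_derivative B' s) (at s within {t0..})"
  and le: "\<And>s. s \<ge> t0 \<Longrightarrow> g s \<le> B' s" and t: "t \<ge> t0"
  shows "(x t)\<^sup>2 \<le> (x t0)\<^sup>2 * exp (2*(B t - B t0))"
proof -
  define y where "y s = (x s)\<^sup>2 * exp (-2 * B s)" for s
  define D where "D s = 2 * x s * (g s * x s) * exp (-2 * B s) + (x s)\<^sup>2 * (exp (-2 * B s) * (-2 * B' s))" for s
  have dy: "(y has_real_derivative D s) (at s within {t0..})" if "s \<ge> t0" for s
    unfolding y_def D_def
    by (rule derivative_eq_intros x[OF that] B[OF that] | simp)+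
  have Dle: "D s \<le> 0" if "s \<ge> t0" for s
  proof -
    have "D s = 2 * (x s)\<^sup>2 * exp (-2 * B s) * (g s - B' s)"
      unfolding D_def by (simp add: algebra_simps power2_eq_square)
    also have "\<dots> \<le> 0"
      using le[OF that] by (intro mult_nonneg_nonpos) auto
    finally show ?thesis .
  qed
  have "\<exists>z\<in>{t0..t}. y t - y t0 = (\<lambda>h. D z * h) (t - t0)"
    using t
  proof (intro mvt_very_simple)
    fix z assume "t0 \<le> z" "z \<le> t"
    have "(y has_real_derivative D z) (at z within {t0..t})"
      by (rule has_field_derivative_subset[OF dy]) (use \<open>t0 \<le> z\<close> in auto)
    thus "(y has_derivative (\<lambda>h. D z * h)) (at z within {t0..t})"
      by (simp add: has_field_derivative_def)
  qed
  then obtain z where z: "z \<in> {t0..t}" "y t - y t0 = (t - t0) * D z" by (auto simp: mult.commute)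
  have "y t \<le> y t0"
  proof -
    have "(t - t0) * D z \<le> 0" using z Dle[of z] t by (intro mult_nonneg_nonpos) auto
    thus ?thesis using z by linarith
  qed
  hence "(x t)\<^sup>2 * exp (-2 * B t) * exp (2 * B t) \<le> (x t0)\<^sup>2 * exp (-2 * B t0) * exp (2 * B t)"
    unfolding y_def by (intro mult_right_mono) auto
  thus ?thesis by (simp add: mult.assoc exp_add[symmetric] algebra_simps)
qed

lemma alpha_le: "2 / (3 * pi) \<le> 1/4"
  using pi_gt3 by (simp add: field_simps)

lemma lnC_ge: "ln 5 \<le> ln (1 + 3 * pi / 2)" "0 \<le> ln (1 + 3 * pi / 2)"
  using pi_gt3 by auto

lemma ln_diff: fixes t0 t :: real assumes "0 \<le> t0" "t0 \<le> t" shows "ln (1 + t) - ln (1 + t0) \<le> ln (1 + (t - t0))"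
proof -
  have "0 \<le> t0 * (t - t0)" using assms by simp
  hence "t0 * t0 \<le> t0 * t" by (simp add: right_diff_distrib)
  hence "1 + t \<le> (1 + t0) * (1 + (t - t0))" using assms by (simp add: algebra_simps)
  hence "ln (1 + t) \<le> ln ((1 + t0) * (1 + (t - t0)))" using assms by simp
  also have "\<dots> = ln (1 + t0) + ln (1 + (t - t0))" using assms by (simp add: ln_mult)
  finally show ?thesis by simp
qed

definition B2 :: "real \<Rightarrow> real" where
  "B2 s = ln (1 + s) - s\<^sup>2 / 4 - s * sin (2 * s) / 4 - cos (2 * s) / 8"

lemma B2_deriv: assumes "s \<ge> 0"
  shows "(B2 has_real_derivative (1 / (1 + s) - s * (cos s)\<^sup>2)) (at s within A)"
proof -
  have d1: "((\<lambda>s. ln (1 + s)) has_real_derivative 1 / (1 + s)) (at s within A)"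
    using assms by (auto intro!: derivative_eq_intros)
  have d2: "((\<lambda>s. s\<^sup>2 / 4) has_real_derivative s / 2) (at s within A)"
    by (auto intro!: derivative_eq_intros)
  have d3: "((\<lambda>s. s * sin (2 * s) / 4) has_real_derivative (sin (2 * s) + 2 * s * cos (2 * s)) / 4) (at s within A)"
    by (auto intro!: derivative_eq_intros)
  have d4: "((\<lambda>s. cos (2 * s) / 8) has_real_derivative - sin (2 * s) / 4) (at s within A)"
    by (auto intro!: derivative_eq_intros)
  have "(B2 has_real_derivative
     (1 / (1 + s) - s / 2 - (sin (2 * s) + 2 * s * cos (2 * s)) / 4 - (- sin (2 * s) / 4))) (at s within A)"
    unfolding B2_def[abs_def] by (intro DERIV_diff d1 d2 d3 d4)
  moreover have "1 / (1 + s) - s / 2 - (sin (2 * s) + 2 * s * cos (2 * s)) / 4 - (- sin (2 * s) / 4)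
      = 1 / (1 + s) - s * (cos s)\<^sup>2"
  proof -
    have e: "(cos s)\<^sup>2 = (1 + cos (2 * s)) / 2" using cos_double_cos[of s] by simp
    show ?thesis unfolding e using assms by (simp add: field_simps)
  qed
  ultimately show ?thesis by (rule DERIV_cong)
qed

lemma B2_diff: assumes "0 \<le> t0" "t0 + 1 \<le> t"
  shows "B2 t - B2 t0 \<le> ln (1 + (t - t0)) + ((t - t0) - (t - t0)\<^sup>2) / 4 + 1/4"
proof -
  define h where "h = t - t0"
  have t: "t = t0 + h" "h \<ge> 0" using assms h_def by auto
  have s1: "- (t * sin (2 * t)) \<le> t" using assms mult_left_mono[of "- sin (2*t)" 1 t] by simp
  have s2: "t0 * sin (2 * t0) \<le> t0" using assms mult_left_mono[of "sin (2*t0)" 1 t0] by simp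
  have c: "- cos (2 * t) + cos (2 * t0) \<le> 2" using cos_le_one[of "2*t0"] cos_ge_minus_one[of "2*t"] by linarith
  have "B2 t - B2 t0 \<le> ln (1 + t) - ln (1 + t0) + (- (t\<^sup>2 - t0\<^sup>2) + t + t0) / 4 + 1/4"
    unfolding B2_def using s1 s2 c by (simp add: field_simps)
  also have "- (t\<^sup>2 - t0\<^sup>2) + t + t0 = h - h\<^sup>2 + 2 * t0 * (1 - h)"
    unfolding t by (simp add: algebra_simps power2_eq_square)
  finally have "B2 t - B2 t0 \<le> ln (1 + t) - ln (1 + t0) + (h - h\<^sup>2 + 2 * t0 * (1 - h)) / 4 + 1/4" .
  moreover have "2 * t0 * (1 - h) \<le> 0" using assms t by (intro mult_nonneg_nonpos) auto
  moreover have "ln (1 + t) - ln (1 + t0) \<le> ln (1 + h)" using ln_diff[of t0 t] assms h_def by simp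
  ultimately have "B2 t - B2 t0 \<le> ln (1 + h) + (h - h\<^sup>2) / 4 + 1/4" by argo
  thus ?thesis unfolding h_def .
qed


lemma final_ineq:
  fixes h :: real assumes "1 \<le> h"
  shows "ln (1 + h) + (h - h\<^sup>2) / 4 + 1/4 \<le> ln (1 + 3 * pi / 2) + 1 - 2 / (3 * pi) * h"
proof -
  have a: "2 / (3 * pi) * h \<le> h / 4" using alpha_le assms mult_right_mono[of "2 / (3 * pi)" "1/4" h] by simp
  show ?thesis
  proof (cases "h \<le> 4")
    case True
    have "ln (1 + h) \<le> ln 5" using True assms by simp
    moreover have "0 \<le> (h - 1)\<^sup>2" by simp
    hence "h * 2 \<le> 1 + h * h" by (simp add: power2_eq_square algebra_simps)
    hence "(h - h\<^sup>2) / 4 + 1/4 + h / 4 \<le> 1" unfolding power2_eq_square by (simp add: field_simps)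
    ultimately show ?thesis using lnC_ge a by linarith
  next
    case False
    have "1 + h \<le> 1 + h / 2 + (h / 2)\<^sup>2 / 2"
    proof -
      have "h * 4 \<le> h * h" using False by (intro mult_left_mono) auto
      thus ?thesis by (simp add: power2_eq_square field_simps)
    qed
    also have "\<dots> \<le> exp (h / 2)" using assms by (intro exp_lower_Taylor_quadratic) auto
    finally have "ln (1 + h) \<le> ln (exp (h / 2))" using assms by (subst ln_le_cancel_iff) auto
    hence "ln (1 + h) \<le> h / 2" by simp
    moreover have "h * 4 \<le> h * h" using False by (intro mult_left_mono) auto
    hence "h / 2 + (h - h\<^sup>2) / 4 + 1/4 + h / 4 \<le> 1" unfolding power2_eq_square by (simp add: field_simps)
    ultimately show ?thesis using lnC_ge a by linarith
  qed
qed

lemma bound: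
  fixes x :: "real \<Rightarrow> real" and t0 t :: real
  assumes t0: "0 \<le> t0" and sol: "is_solution_from ex10_rhs t0 x" and t: "t0 \<le> t"
  shows "\<bar>x t\<bar> \<le> exp (ln (1 + 3 * pi / 2) + 1) * exp (- (2 / (3 * pi)) * (t - t0)) * \<bar>x t0\<bar>"
proof -
  define g where "g s = 1 / (1 + s + (x s)\<^sup>2) - s * \<bar>cos s\<bar>" for s
  define C where "C = ln (1 + 3 * pi / 2) + 1"
  define \<alpha> where "\<alpha> = 2 / (3 * pi)"
  define h where "h = t - t0"
  have h0: "0 \<le> h" using t h_def by simp
  have xd: "\<And>s. s \<ge> t0 \<Longrightarrow> (x has_real_derivative (g s * x s)) (at s within {t0..})"
    using sol unfolding is_solution_from_def ex10_rhs_def g_def by auto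
  have frac: "1 / (1 + s + (x s)\<^sup>2) \<le> 1 / (1 + s)" if "s \<ge> t0" for s
    using that t0 by (intro divide_left_mono mult_pos_pos) (auto intro: add_pos_nonneg)
  have key: "(x t)\<^sup>2 \<le> (x t0)\<^sup>2 * exp (2 * (C - \<alpha> * h))"
  proof (cases "t \<le> t0 + 1")
    case True
    have "(x t)\<^sup>2 \<le> (x t0)\<^sup>2 * exp (2 * ((\<lambda>s. ln (1 + s)) t - (\<lambda>s. ln (1 + s)) t0))"
    proof (rule cmp[where g = g and B' = "\<lambda>s. 1 / (1 + s)"])
      show "(x has_real_derivative g s * x s) (at s within {t0..})" if "t0 \<le> s" for s using xd that .
      show "((\<lambda>s. ln (1 + s)) has_real_derivative 1 / (1 + s)) (at s within {t0..})" if "t0 \<le> s" for s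
        using that t0 by (auto intro!: derivative_eq_intros)
      show "g s \<le> 1 / (1 + s)" if "t0 \<le> s" for s
      proof -
        have "0 \<le> s * \<bar>cos s\<bar>" using that t0 by simp
        thus ?thesis using frac[OF that] unfolding g_def by linarith
      qed
    qed (use t in auto)
    moreover have "ln (1 + t) - ln (1 + t0) \<le> C - \<alpha> * h"
    proof -
      have "ln (1 + t) - ln (1 + t0) \<le> ln (1 + h)" using ln_diff[OF t0 t] h_def by simp
      also have "\<dots> \<le> ln (1 + 3 * pi / 2)" using True h_def h0 pi_gt3 by simp
      also have "\<alpha> * h \<le> 1" using alpha_le True h_def h0 mult_mono[of \<alpha> "1/4" h 1] unfolding \<alpha>_def
        by simp
      hence "ln (1 + 3 * pi / 2) \<le> C - \<alpha> * h" unfolding C_def \<alpha>_def by simp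
      finally show ?thesis .
    qed
    ultimately show ?thesis by (smt (verit) exp_le_cancel_iff mult_left_mono zero_le_power2)
  next
    case False
    have "(x t)\<^sup>2 \<le> (x t0)\<^sup>2 * exp (2 * (B2 t - B2 t0))"
    proof (rule cmp[where g = g and B' = "\<lambda>s. 1 / (1 + s) - s * (cos s)\<^sup>2"])
      show "(x has_real_derivative g s * x s) (at s within {t0..})" if "t0 \<le> s" for s using xd that .
      show "(B2 has_real_derivative 1 / (1 + s) - s * (cos s)\<^sup>2) (at s within {t0..})" if "t0 \<le> s" for s
        using that t0 by (intro B2_deriv) auto
      show "g s \<le> 1 / (1 + s) - s * (cos s)\<^sup>2" if "t0 \<le> s" for s
      proof -
        have "(cos s)\<^sup>2 \<le> \<bar>cos s\<bar>"
          using abs_cos_le_one[of s] mult_left_mono[of "\<bar>cos s\<bar>" 1 "\<bar>cos s\<bar>"]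
          by (simp add: power2_eq_square abs_mult[symmetric])
        hence "s * (cos s)\<^sup>2 \<le> s * \<bar>cos s\<bar>" using that t0 by (intro mult_left_mono) auto
        thus ?thesis using frac[OF that] unfolding g_def by linarith
      qed
    qed (use t in auto)
    moreover have "B2 t - B2 t0 \<le> C - \<alpha> * h"
      using B2_diff[OF t0, of t] False final_ineq[of h] h_def unfolding C_def \<alpha>_def by simp
    ultimately show ?thesis by (smt (verit) exp_le_cancel_iff mult_left_mono zero_le_power2)
  qed
  have "(x t0)\<^sup>2 * exp (2 * (C - \<alpha> * h)) = (exp C * exp (- \<alpha> * h) * \<bar>x t0\<bar>)\<^sup>2"
  proof -
    have "exp (2 * (C - \<alpha> * h)) = (exp C * exp (- \<alpha> * h))\<^sup>2"
      by (simp add: power2_eq_square exp_add[symmetric] algebra_simps)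
    thus ?thesis by (simp add: power_mult_distrib)
  qed
  with key have "\<bar>x t\<bar>\<^sup>2 \<le> (exp C * exp (- \<alpha> * h) * \<bar>x t0\<bar>)\<^sup>2" by simp
  hence "\<bar>x t\<bar> \<le> exp C * exp (- \<alpha> * h) * \<bar>x t0\<bar>"
    by (rule power2_le_imp_le) simp
  thus ?thesis unfolding C_def \<alpha>_def h_def .
qed

theorem mainTheorem10:
  shows "(\<forall>t0\<ge>0. \<forall>x. is_solution_from ex10_rhs t0 x \<longrightarrow>
            (\<forall>t\<ge>t0. \<bar>x t\<bar> \<le> exp (ln (1 + 3 * pi / 2) + 1) * exp (- (2 / (3 * pi)) * (t - t0)) * \<bar>x t0\<bar>))
         \<and> GUES ex10_rhs"
proof
  show A: "\<forall>t0\<ge>0. \<forall>x. is_solution_from ex10_rhs t0 x \<longrightarrow>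
            (\<forall>t\<ge>t0. \<bar>x t\<bar> \<le> exp (ln (1 + 3 * pi / 2) + 1) * exp (- (2 / (3 * pi)) * (t - t0)) * \<bar>x t0\<bar>)"
  proof (intro allI impI)
    fix t0 t :: real and x assume a: "0 \<le> t0" "is_solution_from ex10_rhs t0 x" "t0 \<le> t"
    show "\<bar>x t\<bar> \<le> exp (ln (1 + 3 * pi / 2) + 1) * exp (- (2 / (3 * pi)) * (t - t0)) * \<bar>x t0\<bar>"
      by (rule bound[OF a])
  qed
  show "GUES ex10_rhs"
  proof -
    have "\<forall>t0\<ge>0. \<forall>x. is_solution_from ex10_rhs t0 x \<longrightarrow>
      (\<forall>t\<ge>t0. \<bar>x t\<bar> \<le> exp (ln (1 + 3 * pi / 2) + 1) * \<bar>x t0\<bar> * exp (- (2 / (3 * pi)) * (t - t0)))"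
    proof (intro allI impI)
      fix t0 t :: real and x assume a: "0 \<le> t0" "is_solution_from ex10_rhs t0 x" "t0 \<le> t"
      have "\<bar>x t\<bar> \<le> exp (ln (1 + 3 * pi / 2) + 1) * exp (- (2 / (3 * pi)) * (t - t0)) * \<bar>x t0\<bar>"
        by (rule bound[OF a])
      also have "\<dots> = exp (ln (1 + 3 * pi / 2) + 1) * \<bar>x t0\<bar> * exp (- (2 / (3 * pi)) * (t - t0))"
        by (simp only: mult.assoc mult.commute[of "exp (- (2 / (3 * pi)) * (t - t0))"])
      finally show "\<bar>x t\<bar> \<le> exp (ln (1 + 3 * pi / 2) + 1) * \<bar>x t0\<bar> * exp (- (2 / (3 * pi)) * (t - t0))" .
    qed
    moreover have "0 < exp (ln (1 + 3 * pi / 2) + 1)" "0 < 2 / (3 * pi)" by auto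
    ultimately show ?thesis unfolding GUES_def by (intro exI[of _ "exp (ln (1 + 3 * pi / 2) + 1)"] exI[of _ "2 / (3 * pi)"] conjI) (assumption+)
  qed
qed

end
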